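(* Let $\mathfrak{g}$ be a complex simple Lie algebra of rank $l$ with Cartan matrix $A=(a_{ij})_{i,j\in I}$, $I=\{1,\dots,l\}$, and let $D=\operatorname{diag}(d_1,\dots,d_l)$ with $d_i$ coprime positive integers such that $DA$ is symmetric. Let $\mathcal{P}$ be the group (under componentwise multiplication) of $l$-tuples $P=(P_1(u),\dots,P_l(u))$ of nonzero rational functions in $u$ over $\mathbb{C}$. For $j\in I$ and $P\in\mathcal{P}$ define $T_j(P)\in\mathcal{P}$ by \begin{align*} (T_j(P))_i&=P_i(u) &&\text{if } a_{ij}=0,\\ (T_j(P))_i&=P_i(u)\,P_j\!\left(u-\tfrac{d_i}{2}\right) &&\text{if } a_{ij}=-1,\\ (T_j(P))_i&=P_i(u)\,P_j(u-1)\,P_j(u) &&\text{if } a_{ij}=-2,\\ (T_j(P))_i&=P_i(u)\,P_j\!\left(u-\tfrac32\right)P_j\!\left(u-\tfrac12\right)P_j\!\left(u+\tfrac12\right) &&\text{if } a_{ij}=-3,\\ (T_j(P))_j&=\frac{1}{P_j(u-d_j)}. \end{align*} Then these formulas define an action of the braid group $\mathcal{B}$ of $\mathfrak{g}$ on $\mathcal{P}$, in which the generator $T_j$ acts by $P\mapsto T_j(P)$; for $w$ in the Weyl group with reduced expression $w=s_{r_1}\cdots s_{r_p}$ one sets $T_w(P)=T_{r_1}(T_{r_2}(\cdots T_{r_p}(P)))$.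
   Context: The braid group $\mathcal{B}$ of $\mathfrak{g}$ is the group generated by $T_i$, $i\in I$, with relations $T_iT_j=T_jT_i$ if $a_{ij}=0$; $T_iT_jT_i=T_jT_iT_j$ if $a_{ij}a_{ji}=1$; $(T_iT_j)^2=(T_jT_i)^2$ if $a_{ij}a_{ji}=2$; $(T_iT_j)^3=(T_jT_i)^3$ if $a_{ij}a_{ji}=3$. The $s_i$ are the simple reflections of the Weyl group. *)

theory Defs
  imports Complex_Main "HOL-Computational_Algebra.Polynomial_Factorial" "HOL-Computational_Algebra.Field_as_Ring" "HOL-Computational_Algebra.Normalized_Fraction"
begin

type_synonym ratfun = "complex poly fract"

text \<open>Substitution u := u - c in a rational function: (shift c f)(u) = f(u - c).\<close>
definition shift :: "complex \<Rightarrow> ratfun \<Rightarrow> ratfun" where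
  "shift c f = Fract (pcompose (fst (quot_of_fract f)) [:-c, 1:])
                     (pcompose (snd (quot_of_fract f)) [:-c, 1:])"

text \<open>Cartan matrix of a complex simple Lie algebra (finite type, indecomposable),
  with symmetrizer d: d_i positive coprime integers with DA symmetric.\<close>
definition simple_cartan :: "('i::finite \<Rightarrow> 'i \<Rightarrow> int) \<Rightarrow> ('i \<Rightarrow> nat) \<Rightarrow> bool" where
  "simple_cartan A d \<longleftrightarrow>
     (\<forall>i. A i i = 2) \<and>
     (\<forall>i j. i \<noteq> j \<longrightarrow> A i j \<le> 0) \<and>
     (\<forall>i j. A i j = 0 \<longleftrightarrow> A j i = 0) \<and>
     (\<forall>i. d i > 0) \<and>
     Gcd (d ` UNIV) = 1 \<and>
     (\<forall>i j. int (d i) * A i j = int (d j) * A j i) \<and>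
     (\<forall>x::'i \<Rightarrow> real. x \<noteq> (\<lambda>_. 0) \<longrightarrow>
        (\<Sum>i\<in>UNIV. \<Sum>j\<in>UNIV. real (d i) * real_of_int (A i j) * x i * x j) > 0) \<and>
     (\<forall>J::'i set. J \<noteq> {} \<and> J \<noteq> UNIV \<longrightarrow> (\<exists>i\<in>J. \<exists>j\<in>-J. A i j \<noteq> 0))"

definition Pset :: "('i \<Rightarrow> ratfun) set" where
  "Pset = {P. \<forall>i. P i \<noteq> 0}"

definition Tbraid :: "('i \<Rightarrow> 'i \<Rightarrow> int) \<Rightarrow> ('i \<Rightarrow> nat) \<Rightarrow> 'i \<Rightarrow> ('i \<Rightarrow> ratfun) \<Rightarrow> ('i \<Rightarrow> ratfun)" where
  "Tbraid A d j P = (\<lambda>i.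
     if i = j then inverse (shift (of_nat (d j)) (P j))
     else if A i j = 0 then P i
     else if A i j = -1 then P i * shift (of_nat (d i) / 2) (P j)
     else if A i j = -2 then P i * shift 1 (P j) * P j
     else if A i j = -3 then P i * shift (3/2) (P j) * shift (1/2) (P j) * shift (-1/2) (P j)
     else P i)"

end

theory Submission
  imports Defs
begin


abbreviation sp :: "complex \<Rightarrow> complex poly" where "sp c \<equiv> [:-c, 1:]"

lemma sp_nz: "pcompose b (sp c) = 0 \<longleftrightarrow> b = 0"
  by (rule pcompose_eq_0_iff) simp

lemma shift_Fract:
  assumes "b \<noteq> 0"
  shows "shift c (Fract a b) = Fract (pcompose a (sp c)) (pcompose b (sp c))"
proof -
  obtain a' b' where q: "quot_of_fract (Fract a b) = (a', b')" by (cases "quot_of_fract (Fract a b)")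
  have b': "b' \<noteq> 0" using snd_quot_of_fract_nonzero[of "Fract a b"] q by simp
  have "Fract a' b' = Fract a b" using Fract_quot_of_fract[of "Fract a b"] q by simp
  hence e: "a' * b = a * b'" using eq_fract(1)[OF b' assms] by simp
  have "shift c (Fract a b) = Fract (pcompose a' (sp c)) (pcompose b' (sp c))"
    unfolding shift_def q by simp
  also have "\<dots> = Fract (pcompose a (sp c)) (pcompose b (sp c))"
    using b' assms e
    by (subst eq_fract(1)) (auto simp: sp_nz pcompose_mult[symmetric])
  finally show ?thesis .
qed

lemma shift_mult: "shift c (f * g) = shift c f * shift c g"
proof (induct f)
  case (Fract a b)
  then show ?case proof (induct g)
    case (Fract a' b')
    then show ?case by (simp add: shift_Fract pcompose_mult)
  qed
qed

lemma shift_inverse: "shift c (inverse f) = inverse (shift c f)"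
proof (induct f)
  case (Fract a b)
  then show ?case
  proof (cases "a = 0")
    case True then show ?thesis using Fract by (simp add: shift_Fract eq_fract)
  next
    case False then show ?thesis using Fract by (simp add: shift_Fract)
  qed
qed

lemma shift_zero: "shift c f = 0 \<longleftrightarrow> f = 0"
proof (induct f)
  case (Fract a b)
  then show ?case by (simp add: shift_Fract Zero_fract_def eq_fract sp_nz)
qed

lemma shift_shift: "shift c (shift c' f) = shift (c + c') f"
proof (induct f)
  case (Fract a b)
  have "pcompose (sp c') (sp c) = sp (c + c')" by (simp add: pcompose_pCons)
  then show ?case using Fract by (simp add: shift_Fract sp_nz pcompose_assoc[symmetric])
qed

lemma shift_0: "shift 0 f = f"
  by (induct f) (simp add: shift_Fract)

lemma shift_1: "shift c 1 = 1"
  by (simp add: shift_def pcompose_1 flip: One_fract_def)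




definition Cm :: "('i \<Rightarrow> 'i \<Rightarrow> int) \<Rightarrow> ('i \<Rightarrow> nat) \<Rightarrow> 'i \<Rightarrow> 'i \<Rightarrow> ratfun \<Rightarrow> ratfun" where
  "Cm A d i j f =
     (if A i j = 0 then 1
     else if A i j = -1 then shift (of_nat (d i) / 2) f
     else if A i j = -2 then shift 1 f * f
     else if A i j = -3 then shift (3/2) f * shift (1/2) f * shift (-1/2) f
     else 1)"

lemma Tb_j: "Tbraid A d j P j = inverse (shift (of_nat (d j)) (P j))"
  by (simp add: Tbraid_def)

lemma Tb_k: "k \<noteq> j \<Longrightarrow> Tbraid A d j P k = P k * Cm A d k j (P j)"
  by (auto simp: Tbraid_def Cm_def mult.assoc)

lemma Cm_mult: "Cm A d i j (f * g) = Cm A d i j f * Cm A d i j g"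
  by (simp add: Cm_def shift_mult mult_ac)

lemma Cm_inverse: "Cm A d i j (inverse f) = inverse (Cm A d i j f)"
  by (simp add: Cm_def shift_inverse mult_ac)

lemma Cm_shift: "Cm A d i j (shift c f) = shift c (Cm A d i j f)"
  by (simp add: Cm_def shift_shift shift_mult shift_1 add.commute)

lemma Cm_nz: "f \<noteq> 0 \<Longrightarrow> Cm A d i j f \<noteq> 0"
  by (simp add: Cm_def shift_zero)

lemma Cm_0: "A i j = 0 \<Longrightarrow> Cm A d i j f = 1" by (simp add: Cm_def)
lemma Cm_1: "A i j = -1 \<Longrightarrow> Cm A d i j f = shift (of_nat (d i) / 2) f" by (simp add: Cm_def)
lemma Cm_2: "A i j = -2 \<Longrightarrow> Cm A d i j f = shift 1 f * f" by (simp add: Cm_def)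
lemma Cm_3: "A i j = -3 \<Longrightarrow> Cm A d i j f = shift (3/2) f * shift (1/2) f * shift (-1/2) f" by (simp add: Cm_def)

lemmas bsimps = Tb_j Tb_k Cm_mult Cm_inverse Cm_shift Cm_nz shift_mult shift_inverse shift_shift shift_zero

lemma braid3:
  assumes "i \<noteq> j" "A i j = -1" "A j i = -1" "d i = d j" "\<forall>k. P k \<noteq> 0"
  shows "Tbraid A d i (Tbraid A d j (Tbraid A d i P)) = Tbraid A d j (Tbraid A d i (Tbraid A d j P))"
proof
  fix k
  have pi: "P i \<noteq> 0" "P j \<noteq> 0" "P k \<noteq> 0" using assms by auto
  define h :: complex where "h = of_nat (d j) / 2"
  have h1: "of_nat (d j) = h + h" "(of_nat (d j) :: complex) / 2 = h" by (simp_all add: h_def)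
  consider "k = i" | "k = j" | "k \<noteq> i" "k \<noteq> j" by auto
  then show "Tbraid A d i (Tbraid A d j (Tbraid A d i P)) k = Tbraid A d j (Tbraid A d i (Tbraid A d j P)) k"
  proof cases
    case 1
    then show ?thesis using assms pi by (simp add: bsimps Cm_def h1 add.assoc; simp add: field_simps shift_zero Cm_nz)
  next
    case 2
    then show ?thesis using assms pi by (simp add: bsimps Cm_def h1 add.assoc; simp add: field_simps shift_zero Cm_nz)
  next
    case 3
    then show ?thesis using assms pi by (simp add: bsimps Cm_1 h1 add.assoc; simp add: field_simps shift_zero Cm_nz)
  qed
qed

lemma braid2:
  assumes "i \<noteq> j" "A i j = 0" "A j i = 0" "\<forall>k. P k \<noteq> 0"
  shows "Tbraid A d i (Tbraid A d j P) = Tbraid A d j (Tbraid A d i P)"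
proof
  fix k
  have pi: "P i \<noteq> 0" "P j \<noteq> 0" "P k \<noteq> 0" using assms by auto
  consider "k = i" | "k = j" | "k \<noteq> i" "k \<noteq> j" by auto
  then show "Tbraid A d i (Tbraid A d j P) k = Tbraid A d j (Tbraid A d i P) k"
  proof cases
    case 1
    then show ?thesis using assms pi by (simp add: bsimps Cm_0; simp add: field_simps shift_zero Cm_nz)
  next
    case 2
    then show ?thesis using assms pi by (simp add: bsimps Cm_0; simp add: field_simps shift_zero Cm_nz)
  next
    case 3
    then show ?thesis using assms pi by (simp add: bsimps Cm_0; simp add: field_simps shift_zero Cm_nz)
  qed
qed

lemma braid4:
  assumes "i \<noteq> j" "A i j = -2" "A j i = -1" "d i = 1" "d j = 2" "\<forall>k. P k \<noteq> 0"
  shows "((Tbraid A d i \<circ> Tbraid A d j) ^^ 2) P = ((Tbraid A d j \<circ> Tbraid A d i) ^^ 2) P"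
proof
  fix k
  have pi: "P i \<noteq> 0" "P j \<noteq> 0" "P k \<noteq> 0" using assms by auto
  consider "k = i" | "k = j" | "k \<noteq> i" "k \<noteq> j" by auto
  then show "((Tbraid A d i \<circ> Tbraid A d j) ^^ 2) P k = ((Tbraid A d j \<circ> Tbraid A d i) ^^ 2) P k"
  proof cases
    case 1
    then show ?thesis using assms pi by (simp add: numeral_2_eq_2 bsimps Cm_1 Cm_2 add.assoc; simp add: field_simps shift_zero Cm_nz)
  next
    case 2
    then show ?thesis using assms pi by (simp add: numeral_2_eq_2 bsimps Cm_1 Cm_2 add.assoc; simp add: field_simps shift_zero Cm_nz)
  next
    case 3
    then show ?thesis using assms pi by (simp add: numeral_2_eq_2 bsimps Cm_1 Cm_2 add.assoc; simp add: field_simps shift_zero Cm_nz)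
  qed
qed

lemma braid6:
  assumes "i \<noteq> j" "A i j = -3" "A j i = -1" "d i = 1" "d j = 3" "\<forall>k. P k \<noteq> 0"
  shows "((Tbraid A d i \<circ> Tbraid A d j) ^^ 3) P = ((Tbraid A d j \<circ> Tbraid A d i) ^^ 3) P"
proof
  fix k
  have pi: "P i \<noteq> 0" "P j \<noteq> 0" "P k \<noteq> 0" using assms by auto
  consider "k = i" | "k = j" | "k \<noteq> i" "k \<noteq> j" by auto
  then show "((Tbraid A d i \<circ> Tbraid A d j) ^^ 3) P k = ((Tbraid A d j \<circ> Tbraid A d i) ^^ 3) P k"
  proof cases
    case 1
    then show ?thesis using assms pi by (simp add: numeral_3_eq_3 bsimps Cm_1 Cm_3 add.assoc; simp add: field_simps shift_zero Cm_nz)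
  next
    case 2
    then show ?thesis using assms pi by (simp add: numeral_3_eq_3 bsimps Cm_1 Cm_3 add.assoc; simp add: field_simps shift_zero Cm_nz)
  next
    case 3
    then show ?thesis using assms pi by (simp add: numeral_3_eq_3 bsimps Cm_1 Cm_3 add.assoc; simp add: field_simps shift_zero Cm_nz)
  qed
qed




lemma Tb_bij: "bij_betw (Tbraid A d j) Pset Pset"
proof -
  define U where "U = (\<lambda>Q k. if k = j then inverse (shift (- of_nat (d j)) (Q j))
        else Q k / Cm A d k j (inverse (shift (- of_nat (d j)) (Q j))))"
  show ?thesis
  proof (rule bij_betw_byWitness[where f' = U])
    show "\<forall>P\<in>Pset. U (Tbraid A d j P) = P"
    proof
      fix P :: "'a \<Rightarrow> ratfun" assume "P \<in> Pset"
      hence nz: "\<And>k. P k \<noteq> 0" by (simp add: Pset_def)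
      show "U (Tbraid A d j P) = P"
      proof
        fix k show "U (Tbraid A d j P) k = P k"
          using nz by (cases "k = j") (simp_all add: U_def Tb_j Tb_k shift_inverse shift_shift shift_0 Cm_nz)
      qed
    qed
    show "\<forall>Q\<in>Pset. Tbraid A d j (U Q) = Q"
    proof
      fix Q :: "'a \<Rightarrow> ratfun" assume "Q \<in> Pset"
      hence nz: "\<And>k. Q k \<noteq> 0" by (simp add: Pset_def)
      show "Tbraid A d j (U Q) = Q"
      proof
        fix k show "Tbraid A d j (U Q) k = Q k"
          using nz by (cases "k = j") (simp_all add: U_def Tb_j Tb_k shift_inverse shift_shift shift_0 Cm_nz shift_zero)
      qed
    qed
    show "Tbraid A d j ` Pset \<subseteq> Pset"
      by (auto simp: Pset_def Tb_j Tb_k shift_zero Cm_nz) (metis Tb_j Tb_k Cm_nz inverse_nonzero_iff_nonzero mult_eq_0_iff shift_zero)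
    show "U ` Pset \<subseteq> Pset"
      by (auto simp: Pset_def U_def shift_zero Cm_nz split: if_splits)
  qed
qed




definition adj :: "('i \<Rightarrow> 'i \<Rightarrow> int) \<Rightarrow> 'i \<Rightarrow> 'i \<Rightarrow> bool" where
  "adj A u w \<longleftrightarrow> u \<noteq> w \<and> A u w \<noteq> 0"
definition mlt :: "('i \<Rightarrow> 'i \<Rightarrow> int) \<Rightarrow> 'i \<Rightarrow> 'i \<Rightarrow> bool" where
  "mlt A u w \<longleftrightarrow> u \<noteq> w \<and> A u w * A w u \<ge> 2"
definition sedge :: "('i \<Rightarrow> 'i \<Rightarrow> int) \<Rightarrow> 'i \<Rightarrow> 'i \<Rightarrow> bool" where
  "sedge A u w \<longleftrightarrow> A u w = -1 \<and> A w u = -1"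

fun walk :: "('a \<Rightarrow> 'a \<Rightarrow> bool) \<Rightarrow> 'a list \<Rightarrow> bool" where
  "walk R [] = True"
| "walk R [x] = True"
| "walk R (x # y # r) = (R x y \<and> walk R (y # r))"

lemma walk_append:
  "walk R (xs @ ys) \<longleftrightarrow> walk R xs \<and> walk R ys \<and> (xs \<noteq> [] \<and> ys \<noteq> [] \<longrightarrow> R (last xs) (hd ys))"
proof (induction xs)
  case Nil then show ?case by simp
next
  case (Cons x xs)
  then show ?case by (cases xs; cases ys) auto
qed

lemma walk_Cons: "walk R (x # ys) \<longleftrightarrow> walk R ys \<and> (ys \<noteq> [] \<longrightarrow> R x (hd ys))"
  by (cases ys) auto

definition Qf :: "('i::finite \<Rightarrow> 'i \<Rightarrow> int) \<Rightarrow> ('i \<Rightarrow> nat) \<Rightarrow> ('i \<Rightarrow> real) \<Rightarrow> real" where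
  "Qf A d x = (\<Sum>i\<in>UNIV. \<Sum>j\<in>UNIV. real (d i) * real_of_int (A i j) * x i * x j)"

context
  fixes A :: "'i::finite \<Rightarrow> 'i \<Rightarrow> int" and d :: "'i \<Rightarrow> nat"
  assumes sc: "simple_cartan A d"
begin

lemma diag: "A i i = 2" using sc by (simp add: simple_cartan_def)
lemma offd: "i \<noteq> j \<Longrightarrow> A i j \<le> 0" using sc by (simp add: simple_cartan_def)
lemma zsym: "A i j = 0 \<longleftrightarrow> A j i = 0" using sc by (simp add: simple_cartan_def)
lemma dpos: "d i > 0" using sc by (simp add: simple_cartan_def)
lemma dsym: "int (d i) * A i j = int (d j) * A j i" using sc by (simp add: simple_cartan_def)
lemma posdef: "x \<noteq> (\<lambda>_. 0) \<Longrightarrow> Qf A d x > 0" using sc by (simp add: simple_cartan_def Qf_def)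
lemma conn: "J \<noteq> {} \<Longrightarrow> J \<noteq> UNIV \<Longrightarrow> \<exists>i\<in>J. \<exists>j\<in>-J. A i j \<noteq> 0"
  using sc by (simp add: simple_cartan_def)
lemma gcd1: "Gcd (d ` UNIV) = 1" using sc by (simp add: simple_cartan_def)

lemma dsym_real: "real (d i) * real_of_int (A i j) = real (d j) * real_of_int (A j i)"
proof -
  have "real_of_int (int (d i) * A i j) = real_of_int (int (d j) * A j i)" using dsym by simp
  then show ?thesis by simp
qed

lemma walk_exists: "\<exists>vs. vs \<noteq> [] \<and> hd vs = u \<and> last vs = v \<and> walk (adj A) vs"
proof (rule ccontr)
  assume nv: "\<not> ?thesis"
  define J where "J = {v. \<exists>vs. vs \<noteq> [] \<and> hd vs = u \<and> last vs = v \<and> walk (adj A) vs}"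
  have "u \<in> J" unfolding J_def by (rule CollectI, rule exI[of _ "[u]"]) simp
  moreover have "v \<notin> J" using nv unfolding J_def by simp
  ultimately obtain x y where x: "x \<in> J" and y: "y \<notin> J" and a: "A x y \<noteq> 0"
    using conn[of J] by auto
  from x obtain vs where vs: "vs \<noteq> []" "hd vs = u" "last vs = x" "walk (adj A) vs"
    unfolding J_def by auto
  have "x \<noteq> y" using x y by auto
  hence "walk (adj A) (vs @ [y])" using vs a by (simp add: walk_append adj_def)
  hence "y \<in> J" unfolding J_def using vs by (intro CollectI exI[of _ "vs @ [y]"]) simp
  with y show False by simp
qed

lemma int_neg_prod: "(a::int) \<le> -1 \<Longrightarrow> b \<le> -1 \<Longrightarrow> a * b \<ge> -a \<and> a * b \<ge> -b"
proof -
  assume a: "a \<le> -1" and b: "b \<le> -1"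
  have "a * (b + 1) \<ge> 0" by (rule mult_nonpos_nonpos) (use a b in auto)
  moreover have "(a + 1) * b \<ge> 0" by (rule mult_nonpos_nonpos) (use a b in auto)
  ultimately show ?thesis by (simp add: algebra_simps)
qed

lemma adj_sedge: "adj A u w \<Longrightarrow> \<not> mlt A u w \<Longrightarrow> sedge A u w"
proof -
  assume ad: "adj A u w" and nm: "\<not> mlt A u w"
  have ne: "u \<noteq> w" "A u w \<noteq> 0" using ad by (auto simp: adj_def)
  have "A w u \<noteq> 0" using ne zsym by metis
  hence n: "A u w \<le> -1" "A w u \<le> -1" using offd[of u w] offd[of w u] ne by auto
  have "A u w * A w u < 2" using nm ne by (auto simp: mlt_def)
  then show ?thesis using int_neg_prod[OF n] n by (auto simp: sedge_def)
qed

lemma mlt_neg: "mlt A u w \<Longrightarrow> A u w < 0 \<and> A w u < 0"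
proof -
  assume m: "mlt A u w"
  hence "u \<noteq> w" "A u w * A w u \<ge> 2" by (auto simp: mlt_def)
  moreover have "A u w \<noteq> 0" using calculation by auto
  ultimately show ?thesis using offd[of u w] offd[of w u] zsym[of u w] by force
qed

lemma dsum: "(\<Sum>i\<in>(UNIV::'i set). (if i = w then c else 0) * f i) = (c::real) * f w"
proof -
  have eq: "(\<lambda>i. (if i = w then c else 0) * f i) = (\<lambda>i. if i = w then c * f i else 0)" by auto
  show ?thesis by (simp only: eq) simp
qed

lemma Q_add:
  "Qf A d (\<lambda>k. x k + (if k = w then c else 0)) =
   Qf A d x + 2 * c * (\<Sum>i\<in>UNIV. real (d i) * real_of_int (A i w) * x i) + 2 * c^2 * real (d w)"
proof -
  let ?B = "\<lambda>i j. real (d i) * real_of_int (A i j)"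
  let ?y = "\<lambda>k::'i. if k = w then c else (0::real)"
  have e1: "Qf A d (\<lambda>k. x k + ?y k) = Qf A d x + (\<Sum>i\<in>UNIV. \<Sum>j\<in>UNIV. ?B i j * x i * ?y j)
     + (\<Sum>i\<in>UNIV. \<Sum>j\<in>UNIV. ?B i j * ?y i * x j) + (\<Sum>i\<in>UNIV. \<Sum>j\<in>UNIV. ?B i j * ?y i * ?y j)"
    by (simp add: Qf_def algebra_simps sum.distrib)
  have e2: "(\<Sum>i\<in>UNIV. \<Sum>j\<in>UNIV. ?B i j * x i * ?y j) = c * (\<Sum>i\<in>UNIV. ?B i w * x i)"
    by (simp add: sum_distrib_left mult_ac if_distrib cong: if_cong)
  have e3a: "(\<Sum>i\<in>UNIV. \<Sum>j\<in>UNIV. ?B i j * ?y i * x j) = (\<Sum>i\<in>UNIV. ?y i * (\<Sum>j\<in>UNIV. ?B i j * x j))"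
    by (simp add: sum_distrib_left mult_ac)
  have e3: "(\<Sum>i\<in>UNIV. \<Sum>j\<in>UNIV. ?B i j * ?y i * x j) = c * (\<Sum>j\<in>UNIV. ?B w j * x j)"
    unfolding e3a by (rule dsum)
  have e3': "(\<Sum>j\<in>UNIV. ?B w j * x j) = (\<Sum>j\<in>UNIV. ?B j w * x j)"
    using dsym_real by simp
  have e4: "(\<Sum>i\<in>UNIV. \<Sum>j\<in>UNIV. ?B i j * ?y i * ?y j) = 2 * c^2 * real (d w)"
  proof -
    have "(\<Sum>i\<in>UNIV. \<Sum>j\<in>UNIV. ?B i j * ?y i * ?y j) = (\<Sum>i\<in>UNIV. ?y i * (\<Sum>j\<in>UNIV. ?y j * ?B i j))"
      by (simp add: sum_distrib_left mult_ac)
    also have "\<dots> = (\<Sum>i\<in>UNIV. ?y i * (c * ?B i w))" by (simp only: dsum)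
    also have "\<dots> = c * (c * ?B w w)" by (rule dsum)
    finally show ?thesis by (simp add: diag power2_eq_square)
  qed
  show ?thesis using e1 e2 e3 e3' e4 by simp
qed

lemma sum_bound:
  assumes "\<forall>i. x i \<ge> 0" "x w = 0" "v \<noteq> w"
  shows "(\<Sum>i\<in>UNIV. real (d i) * real_of_int (A i w) * x i) \<le> real (d v) * real_of_int (A v w) * x v"
proof -
  have "(\<Sum>i\<in>UNIV. real (d i) * real_of_int (A i w) * x i) =
        real (d v) * real_of_int (A v w) * x v + (\<Sum>i\<in>UNIV - {v}. real (d i) * real_of_int (A i w) * x i)"
    by (simp add: sum.remove)
  moreover have "(\<Sum>i\<in>UNIV - {v}. real (d i) * real_of_int (A i w) * x i) \<le> 0"
  proof (rule sum_nonpos)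
    fix i assume "i \<in> UNIV - {v}"
    show "real (d i) * real_of_int (A i w) * x i \<le> 0"
    proof (cases "i = w")
      case True then show ?thesis using assms by simp
    next
      case False
      have "real_of_int (A i w) \<le> 0" using offd[OF False] by simp
      hence "real (d i) * real_of_int (A i w) \<le> 0" by (simp add: mult_nonneg_nonpos)
      then show ?thesis using assms(1) by (simp add: mult_nonpos_nonneg)
    qed
  qed
  ultimately show ?thesis by simp
qed

definition ind :: "'i list \<Rightarrow> 'i \<Rightarrow> real" where
  "ind vs = (\<lambda>k. if k \<in> set vs then 1 else 0)"

lemma Q_zero: "Qf A d (\<lambda>_. 0) = 0" by (simp add: Qf_def)

lemma chainQ:
  "walk (sedge A) vs \<Longrightarrow> distinct vs \<Longrightarrow> vs \<noteq> [] \<Longrightarrow>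
   Qf A d (ind vs) \<le> 2 * real (d (hd vs)) \<and> (\<forall>v\<in>set vs. d v = d (hd vs))"
proof (induction vs)
  case Nil then show ?case by simp
next
  case (Cons x ws)
  show ?case
  proof (cases "ws = []")
    case True
    have i0: "ind [x] = (\<lambda>k. 0 + (if k = x then 1 else 0))" by (auto simp: ind_def)
    have "Qf A d (ind [x]) = 2 * real (d x)"
      unfolding i0 Q_add[of "\<lambda>_. 0" x 1] by (simp add: Q_zero)
    then show ?thesis using True by simp
  next
    case False
    have w: "walk (sedge A) ws" "sedge A x (hd ws)" using Cons.prems False by (auto simp: walk_Cons)
    have dx: "x \<notin> set ws" "distinct ws" using Cons.prems by auto
    from Cons.IH[OF w(1) dx(2) False] have IH: "Qf A d (ind ws) \<le> 2 * real (d (hd ws))"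
      "\<forall>v\<in>set ws. d v = d (hd ws)" by auto
    have de: "d x = d (hd ws)" using dsym[of x "hd ws"] w(2) by (simp add: sedge_def)
    have i: "ind (x # ws) = (\<lambda>k. ind ws k + (if k = x then 1 else 0))"
      using dx by (auto simp: ind_def)
    have hx: "hd ws \<noteq> x" using dx False by auto
    have "(\<Sum>i\<in>UNIV. real (d i) * real_of_int (A i x) * ind ws i) \<le> real (d (hd ws)) * real_of_int (A (hd ws) x) * ind ws (hd ws)"
      by (rule sum_bound) (use dx hx in \<open>auto simp: ind_def\<close>)
    also have "\<dots> = - real (d (hd ws))" using w(2) False by (simp add: sedge_def ind_def)
    finally have sb: "(\<Sum>i\<in>UNIV. real (d i) * real_of_int (A i x) * ind ws i) \<le> - real (d (hd ws))" .
    have "Qf A d (ind (x # ws)) \<le> 2 * real (d x)"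
      unfolding i Q_add[of "ind ws" x 1] using IH(1) sb de by simp
    moreover have "\<forall>v\<in>set (x # ws). d v = d (hd (x # ws))" using IH(2) de by auto
    ultimately show ?thesis unfolding list.sel(1) by blast
  qed
qed

lemma end_term:
  fixes dl da al al' :: real
  assumes rel: "dl * al = da * al'" and p: "al * al' \<ge> 2" and dl: "dl > 0"
  shows "2 * (- al' / 2) * (dl * al) + 2 * (- al' / 2)^2 * da \<le> - dl"
proof -
  have sq: "2 * (- al' / 2)^2 * da = al' * (da * al') / 2" by (simp add: power2_eq_square)
  have "2 * (- al' / 2) * (dl * al) + 2 * (- al' / 2)^2 * da = - (dl * (al * al')) / 2"
    unfolding sq rel[symmetric] by (simp add: field_simps)
  moreover have "dl * (al * al') \<ge> dl * 2" using p dl by simp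
  ultimately show ?thesis by linarith
qed

lemma no_config:
  assumes vs: "vs \<noteq> []" "walk (sedge A) vs" "distinct vs"
    and a: "a \<notin> set vs" and e: "e \<notin> set vs" and ae: "a \<noteq> e"
    and m1: "mlt A a (hd vs)" and m2: "mlt A (last vs) e"
  shows False
proof -
  define v0 where "v0 = hd vs"
  define vm where "vm = last vs"
  have v0s: "v0 \<in> set vs" "vm \<in> set vs" using vs by (auto simp: v0_def vm_def)
  obtain Qc: "Qf A d (ind vs) \<le> 2 * real (d v0)" and dc: "\<forall>v\<in>set vs. d v = d v0"
    using chainQ[OF vs(2,3,1)] unfolding v0_def by blast
  have dm: "d vm = d v0" using dc v0s(2) by blast
  define t :: real where "t = - real_of_int (A a v0) / 2"
  define s :: real where "s = - real_of_int (A e vm) / 2"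
  have tpos: "t \<ge> 0" using mlt_neg[OF m1] unfolding t_def v0_def by simp
  have spos: "s \<ge> 0" using mlt_neg[OF m2] unfolding s_def vm_def by simp
  define g where "g = (\<lambda>k. ind vs k + (if k = a then t else 0))"
  define x where "x = (\<lambda>k. g k + (if k = e then s else 0))"
  have av: "v0 \<noteq> a" "vm \<noteq> a" "v0 \<noteq> e" "vm \<noteq> e" using a e v0s by auto
  have sb1: "(\<Sum>i\<in>UNIV. real (d i) * real_of_int (A i a) * ind vs i) \<le> real (d v0) * real_of_int (A v0 a) * ind vs v0"
    by (rule sum_bound) (use a av in \<open>auto simp: ind_def\<close>)
  have sb2: "(\<Sum>i\<in>UNIV. real (d i) * real_of_int (A i e) * g i) \<le> real (d vm) * real_of_int (A vm e) * g vm"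
    by (rule sum_bound) (use e av ae tpos in \<open>auto simp: ind_def g_def\<close>)
  have gv: "g vm = 1" "ind vs v0 = 1" using av v0s by (auto simp: g_def ind_def)
  have Qg: "Qf A d g \<le> Qf A d (ind vs) + 2 * t * (real (d v0) * real_of_int (A v0 a)) + 2 * t^2 * real (d a)"
  proof -
    have "Qf A d g = Qf A d (ind vs) + 2 * t * (\<Sum>i\<in>UNIV. real (d i) * real_of_int (A i a) * ind vs i) + 2 * t^2 * real (d a)"
      unfolding g_def by (rule Q_add)
    moreover have "2 * t * (\<Sum>i\<in>UNIV. real (d i) * real_of_int (A i a) * ind vs i) \<le> 2 * t * (real (d v0) * real_of_int (A v0 a))"
      using sb1 gv tpos by (simp add: mult_left_mono)
    ultimately show ?thesis by linarith
  qed
  have Qx: "Qf A d x \<le> Qf A d g + 2 * s * (real (d vm) * real_of_int (A vm e)) + 2 * s^2 * real (d e)"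
  proof -
    have "Qf A d x = Qf A d g + 2 * s * (\<Sum>i\<in>UNIV. real (d i) * real_of_int (A i e) * g i) + 2 * s^2 * real (d e)"
      unfolding x_def by (rule Q_add)
    moreover have "2 * s * (\<Sum>i\<in>UNIV. real (d i) * real_of_int (A i e) * g i) \<le> 2 * s * (real (d vm) * real_of_int (A vm e))"
      using sb2 gv spos by (simp add: mult_left_mono)
    ultimately show ?thesis by linarith
  qed
  have p1: "A v0 a * A a v0 \<ge> 2" using m1 unfolding v0_def mlt_def by (simp add: mult.commute)
  have p2: "A vm e * A e vm \<ge> 2" using m2 unfolding vm_def mlt_def by simp
  have p1': "2 \<le> real_of_int (A v0 a) * real_of_int (A a v0)" by (metis p1 of_int_le_iff of_int_mult of_int_numeral)
  have p2': "2 \<le> real_of_int (A vm e) * real_of_int (A e vm)" by (metis p2 of_int_le_iff of_int_mult of_int_numeral)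
  have e1: "2 * t * (real (d v0) * real_of_int (A v0 a)) + 2 * t^2 * real (d a) \<le> - real (d v0)"
    unfolding t_def by (rule end_term[OF dsym_real]) (use p1' dpos in simp_all)
  have e2: "2 * s * (real (d vm) * real_of_int (A vm e)) + 2 * s^2 * real (d e) \<le> - real (d vm)"
    unfolding s_def by (rule end_term[OF dsym_real]) (use p2' dpos in simp_all)
  have "Qf A d x \<le> 0" using Qc Qg Qx e1 e2 dm by linarith
  moreover have "x \<noteq> (\<lambda>_. 0)"
  proof
    assume "x = (\<lambda>_. 0)"
    hence "x v0 = 0" by simp
    moreover have "x v0 = 1" using av gv by (simp add: x_def g_def)
    ultimately show False by simp
  qed
  ultimately show False using posdef by fastforce
qed

lemma walk_pre: "walk R (xs @ ys) \<Longrightarrow> walk R xs" by (simp add: walk_append)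
lemma walk_suf: "walk R (xs @ ys) \<Longrightarrow> walk R ys" by (simp add: walk_append)

lemma mlt_sym: "mlt A u w \<Longrightarrow> mlt A w u" by (auto simp: mlt_def mult.commute)

lemma hd_last_distinct: "distinct vs \<Longrightarrow> length vs \<ge> 2 \<Longrightarrow> hd vs \<noteq> last vs"
  by (cases vs rule: remdups_adj.cases) auto

lemma to_sedge: "walk (adj A) vs \<Longrightarrow> (\<forall>p u w r. vs = p @ u # w # r \<longrightarrow> \<not> mlt A u w) \<Longrightarrow> walk (sedge A) vs"
proof (induction vs rule: induct_list012)
  case (3 x y r)
  have "\<not> mlt A x y" using "3.prems"(2)[rule_format, of "[]"] by simp
  moreover have "adj A x y" using "3.prems"(1) by simp
  ultimately have "sedge A x y" using adj_sedge by blast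
  moreover have "walk (sedge A) (y # r)"
  proof (rule "3.IH"(2))
    show "walk (adj A) (y # r)" using "3.prems"(1) by simp
    show "\<forall>p u w r'. y # r = p @ u # w # r' \<longrightarrow> \<not> mlt A u w"
    proof (intro allI impI)
      fix p u w r' assume "y # r = p @ u # w # r'"
      hence "x # y # r = (x # p) @ u # w # r'" by simp
      then show "\<not> mlt A u w" using "3.prems"(2) by blast
    qed
  qed
  ultimately show ?case by simp
qed auto

definition conf :: "'i \<Rightarrow> 'i list \<Rightarrow> 'i \<Rightarrow> bool" where
  "conf a vs e \<longleftrightarrow> vs \<noteq> [] \<and> walk (adj A) vs \<and> mlt A a (hd vs) \<and> mlt A (last vs) e \<and> {a, hd vs} \<noteq> {last vs, e}"

lemma uniq_mlt:
  assumes mab: "mlt A a0 b0" and mce: "mlt A c0 e0"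
  shows "{a0, b0} = {c0, e0}"
proof (rule ccontr)
  assume ne: "{a0, b0} \<noteq> {c0, e0}"
  obtain vs0 where vs0: "vs0 \<noteq> []" "hd vs0 = b0" "last vs0 = c0" "walk (adj A) vs0"
    using walk_exists by blast
  have "conf a0 vs0 e0" using vs0 mab mce ne by (simp add: conf_def)
  hence "\<exists>n a vs e. conf a vs e \<and> length vs = n" by blast
  then obtain n where Pn: "\<exists>a vs e. conf a vs e \<and> length vs = n"
    and nmin: "\<forall>m<n. \<not> (\<exists>a vs e. conf a vs e \<and> length vs = m)"
    using exists_least_iff[of "\<lambda>n. \<exists>a vs e. conf a vs e \<and> length vs = n"] by blast
  obtain a vs e where c: "conf a vs e" and ln: "length vs = n" using Pn by blast
  have minc: "length vs \<le> length vs'" if "conf a' vs' e'" for a' vs' e'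
    using nmin that ln by (metis not_le)
  have vne: "vs \<noteq> []" and wv: "walk (adj A) vs" and m1: "mlt A a (hd vs)" and m2: "mlt A (last vs) e"
    and cne: "{a, hd vs} \<noteq> {last vs, e}" using c by (auto simp: conf_def)
  have dist: "distinct vs"
  proof (rule ccontr)
    assume "\<not> distinct vs"
    then obtain xs y ys zs where vsd: "vs = xs @ [y] @ ys @ [y] @ zs" using not_distinct_decomp by blast
    let ?v = "xs @ y # zs"
    have w1: "walk (adj A) (xs @ y # ys)" and w2: "walk (adj A) (y # zs)"
      using wv vsd walk_pre[of "adj A" "xs @ y # ys" "y # zs"] walk_suf[of "adj A" "xs @ y # ys" "y # zs"] by auto
    have "walk (adj A) ?v" using w1 w2 by (simp add: walk_append)
    moreover have "hd ?v = hd vs" using vsd by (cases xs) auto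
    moreover have "last ?v = last vs" using vsd by simp
    ultimately have "conf a ?v e" using c by (simp add: conf_def)
    moreover have "length ?v < length vs" using vsd by simp
    ultimately show False using minc by fastforce
  qed
  have P2: "\<not> mlt A u w" if vsp: "vs = p @ u # w # r" for p u w r
  proof
    assume muw: "mlt A u w"
    have wp: "walk (adj A) (p @ [u])" and ws: "walk (adj A) (w # r)"
      using wv vsp walk_pre[of "adj A" "p @ [u]" "w # r"] walk_suf[of "adj A" "p @ [u]" "w # r"] by auto
    have hp: "hd (p @ [u]) = hd vs" using vsp by (cases p) auto
    show False
    proof (cases "{a, hd vs} = {u, w}")
      case False
      have "conf a (p @ [u]) w" using wp hp m1 muw False by (simp add: conf_def)
      moreover have "length (p @ [u]) < length vs" using vsp by simp
      ultimately show False using minc by fastforce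
    next
      case True
      have "last (w # r) = last vs" using vsp by simp
      hence "conf u (w # r) e" using ws muw m2 True cne by (simp add: conf_def)
      moreover have "length (w # r) < length vs" using vsp by simp
      ultimately show False using minc by fastforce
    qed
  qed
  have P3: "a \<notin> set vs"
  proof
    assume "a \<in> set vs"
    then obtain p r where vsp: "vs = p @ a # r" by (meson split_list)
    have "a \<noteq> hd vs" using m1 by (simp add: mlt_def)
    hence pne: "p \<noteq> []" using vsp by auto
    have ws: "walk (adj A) (a # r)" using wv vsp walk_suf[of "adj A" p "a # r"] by simp
    have "last (a # r) = last vs" using vsp by simp
    moreover have "{hd vs, a} \<noteq> {last vs, e}" using cne by (simp add: insert_commute)
    ultimately have "conf (hd vs) (a # r) e" using ws mlt_sym[OF m1] m2 by (simp add: conf_def)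
    moreover have "length (a # r) < length vs" using vsp pne by simp
    ultimately show False using minc by fastforce
  qed
  have P4: "e \<notin> set vs"
  proof
    assume "e \<in> set vs"
    then obtain p r where vsp: "vs = p @ e # r" by (meson split_list)
    have "e \<noteq> last vs" using m2 by (auto simp: mlt_def)
    hence rne: "r \<noteq> []" using vsp by auto
    have wp: "walk (adj A) (p @ [e])" using wv vsp walk_pre[of "adj A" "p @ [e]" r] by simp
    have hp: "hd (p @ [e]) = hd vs" using vsp by (cases p) auto
    have "{a, hd vs} \<noteq> {e, last vs}" using cne by (simp add: insert_commute)
    hence "conf a (p @ [e]) (last vs)" using wp hp m1 mlt_sym[OF m2] by (simp add: conf_def)
    moreover have "length (p @ [e]) < length vs" using vsp rne by simp
    ultimately show False using minc by fastforce
  qed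
  have P5: "a \<noteq> e"
  proof
    assume ae: "a = e"
    show False
    proof (cases "length vs \<ge> 2")
      case False
      then obtain v where "vs = [v]" using vne by (cases vs) (auto simp: Suc_le_eq)
      then show False using cne ae by (simp add: insert_commute)
    next
      case True
      have hl: "hd vs \<noteq> last vs" by (rule hd_last_distinct[OF dist True])
      have "hd vs \<noteq> a" using m1 by (auto simp: mlt_def)
      hence "{hd vs, a} \<noteq> {a, last vs}" using hl by (auto simp: doubleton_eq_iff)
      hence "conf (hd vs) [a] (last vs)" using mlt_sym[OF m1] mlt_sym[OF m2] ae by (simp add: conf_def)
      moreover have "length [a] < length vs" using True by simp
      ultimately show False using minc by fastforce
    qed
  qed
  have sw: "walk (sedge A) vs" by (rule to_sedge[OF wv]) (use P2 in blast)
  show False by (rule no_config[OF vne sw dist P3 P4 P5 m1 m2])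
qed

lemma short_d1:
  assumes ij: "i \<noteq> j" and aji: "A j i = -1" and aij: "A i j \<le> -2"
  shows "d i = 1"
proof -
  have mij: "mlt A i j" using ij aji aij by (simp add: mlt_def)
  define J where "J = {k. d i dvd d k}"
  have iJ: "i \<in> J" unfolding J_def by simp
  have "int (d i) * A i j = - int (d j)" using dsym[of i j] aji by simp
  hence "int (d j) = int (d i) * (- A i j)" by simp
  hence "d i dvd d j" by (metis dvd_triv_left int_dvd_int_iff)
  hence jJ: "j \<in> J" unfolding J_def by simp
  have "J = UNIV"
  proof (rule ccontr)
    assume "J \<noteq> UNIV"
    then obtain k m where k: "k \<in> J" and m: "m \<notin> J" and akm: "A k m \<noteq> 0"
      using conn[of J] iJ by blast
    have km: "k \<noteq> m" using k m by auto
    show False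
    proof (cases "mlt A k m")
      case True
      have "{k, m} = {i, j}" by (rule uniq_mlt[OF True mij])
      hence "m \<in> {i, j}" by blast
      then show False using m iJ jJ by blast
    next
      case False
      have "sedge A k m" by (rule adj_sedge) (use km akm False in \<open>auto simp: adj_def\<close>)
      hence "d k = d m" using dsym[of k m] by (simp add: sedge_def)
      then show False using k m unfolding J_def by simp
    qed
  qed
  hence "\<forall>k. d i dvd d k" unfolding J_def by blast
  hence "d i dvd Gcd (d ` UNIV)" by (auto intro: Gcd_greatest)
  then show ?thesis using gcd1 by simp
qed

end



lemma prod_bound:
  assumes "(a::int) \<le> 0" "b \<le> 0" "a * b = n" "1 \<le> n"
  shows "-n \<le> a \<and> a \<le> -1 \<and> -n \<le> b \<and> b \<le> -1"
proof -
  have "a \<noteq> 0" "b \<noteq> 0" using assms by auto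
  hence a1: "a \<le> -1" "b \<le> -1" using assms by auto
  have "a * (b + 1) \<ge> 0" by (rule mult_nonpos_nonpos) (use a1 in auto)
  moreover have "(a + 1) * b \<ge> 0" by (rule mult_nonpos_nonpos) (use a1 in auto)
  ultimately show ?thesis using a1 assms(3) by (simp add: algebra_simps)
qed

lemma helper:
  fixes A :: "'i::finite \<Rightarrow> 'i \<Rightarrow> int" and d :: "'i \<Rightarrow> nat" and P :: "'i \<Rightarrow> ratfun"
  assumes sc: "simple_cartan A d" and ij: "i \<noteq> j" and P: "P \<in> Pset"
  shows "(A i j * A j i = 0 \<longrightarrow>
          Tbraid A d i (Tbraid A d j P) = Tbraid A d j (Tbraid A d i P)) \<and>
       (A i j * A j i = 1 \<longrightarrow>
          Tbraid A d i (Tbraid A d j (Tbraid A d i P)) = Tbraid A d j (Tbraid A d i (Tbraid A d j P))) \<and>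
       (A i j * A j i = 2 \<longrightarrow>
          ((Tbraid A d i \<circ> Tbraid A d j) ^^ 2) P = ((Tbraid A d j \<circ> Tbraid A d i) ^^ 2) P) \<and>
       (A i j * A j i = 3 \<longrightarrow>
          ((Tbraid A d i \<circ> Tbraid A d j) ^^ 3) P = ((Tbraid A d j \<circ> Tbraid A d i) ^^ 3) P)"
proof -
  have nz: "\<forall>k. P k \<noteq> 0" using P by (simp add: Pset_def)
  have o1: "A i j \<le> 0" "A j i \<le> 0" using offd[OF sc ij] offd[OF sc ij[symmetric]] by auto
  have ds: "int (d i) * A i j = int (d j) * A j i" by (rule dsym[OF sc])
  show ?thesis
  proof (intro conjI impI)
    assume "A i j * A j i = 0"
    hence "A i j = 0 \<and> A j i = 0" using zsym[OF sc, of i j] by auto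
    then show "Tbraid A d i (Tbraid A d j P) = Tbraid A d j (Tbraid A d i P)"
      using braid2[OF ij _ _ nz] by auto
  next
    assume "A i j * A j i = 1"
    from prod_bound[OF o1 this] have "A i j = -1" "A j i = -1" by auto
    moreover have "d i = d j" using ds calculation by simp
    ultimately show "Tbraid A d i (Tbraid A d j (Tbraid A d i P)) = Tbraid A d j (Tbraid A d i (Tbraid A d j P))"
      using braid3[OF ij _ _ _ nz] by blast
  next
    assume p: "A i j * A j i = 2"
    from prod_bound[OF o1 p] have "A i j = -1 \<or> A i j = -2" by auto
    then show "((Tbraid A d i \<circ> Tbraid A d j) ^^ 2) P = ((Tbraid A d j \<circ> Tbraid A d i) ^^ 2) P"
    proof
      assume a: "A i j = -1"
      hence b: "A j i = -2" using p by simp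
      have d1: "d j = 1" by (rule short_d1[OF sc ij[symmetric]]) (use a b in simp_all)
      hence d2: "d i = 2" using ds a b by simp
      have "((Tbraid A d j \<circ> Tbraid A d i) ^^ 2) P = ((Tbraid A d i \<circ> Tbraid A d j) ^^ 2) P" by (rule braid4[OF ij[symmetric] b a d1 d2 nz])
      then show ?thesis by (rule sym)
    next
      assume a: "A i j = -2"
      hence b: "A j i = -1" using p by simp
      have d1: "d i = 1" by (rule short_d1[OF sc ij]) (use a b in simp_all)
      hence d2: "d j = 2" using ds a b by simp
      show ?thesis by (rule braid4[OF ij a b d1 d2 nz])
    qed
  next
    assume p: "A i j * A j i = 3"
    from prod_bound[OF o1 p] have "A i j = -1 \<or> A i j = -2 \<or> A i j = -3" by auto
    moreover have "A i j \<noteq> -2"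
    proof
      assume "A i j = -2"
      with p have "-2 * A j i = 3" by simp
      then show False by presburger
    qed
    ultimately have "A i j = -1 \<or> A i j = -3" by blast
    then show "((Tbraid A d i \<circ> Tbraid A d j) ^^ 3) P = ((Tbraid A d j \<circ> Tbraid A d i) ^^ 3) P"
    proof
      assume a: "A i j = -1"
      hence b: "A j i = -3" using p by simp
      have d1: "d j = 1" by (rule short_d1[OF sc ij[symmetric]]) (use a b in simp_all)
      hence d2: "d i = 3" using ds a b by simp
      have "((Tbraid A d j \<circ> Tbraid A d i) ^^ 3) P = ((Tbraid A d i \<circ> Tbraid A d j) ^^ 3) P" by (rule braid6[OF ij[symmetric] b a d1 d2 nz])
      then show ?thesis by (rule sym)
    next
      assume a: "A i j = -3"
      hence b: "A j i = -1" using p by simp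
      have d1: "d i = 1" by (rule short_d1[OF sc ij]) (use a b in simp_all)
      hence d2: "d j = 3" using ds a b by simp
      show ?thesis by (rule braid6[OF ij a b d1 d2 nz])
    qed
qed
qed


theorem mainTheorem1:
  fixes A :: "'i::finite \<Rightarrow> 'i \<Rightarrow> int" and d :: "'i \<Rightarrow> nat"
  assumes "simple_cartan A d"
  shows "(\<forall>j. bij_betw (Tbraid A d j) Pset Pset) \<and>
    (\<forall>i j. i \<noteq> j \<longrightarrow> (\<forall>P\<in>Pset.
       (A i j * A j i = 0 \<longrightarrow>
          Tbraid A d i (Tbraid A d j P) = Tbraid A d j (Tbraid A d i P)) \<and>
       (A i j * A j i = 1 \<longrightarrow>
          Tbraid A d i (Tbraid A d j (Tbraid A d i P)) = Tbraid A d j (Tbraid A d i (Tbraid A d j P))) \<and>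
       (A i j * A j i = 2 \<longrightarrow>
          ((Tbraid A d i \<circ> Tbraid A d j) ^^ 2) P = ((Tbraid A d j \<circ> Tbraid A d i) ^^ 2) P) \<and>
       (A i j * A j i = 3 \<longrightarrow>
          ((Tbraid A d i \<circ> Tbraid A d j) ^^ 3) P = ((Tbraid A d j \<circ> Tbraid A d i) ^^ 3) P)))"
  apply (rule conjI)
   apply (rule allI, rule Tb_bij)
  apply (intro allI impI ballI)
  apply (rule helper[OF assms]; assumption)
  done


end
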